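(* In the continuous Donation Game, let $\chi\ge1$ and $0\le\kappa\le b(K)-c(K)$, and let $D:=\chi b(K)+c(K)$. Suppose $$\lambda\ge\frac{b(K)+\chi c(K)}{\chi b(K)+c(K)},$$ and $p_0\in[0,1]$ satisfies $$\frac{(\chi-1)\kappa-\lambda D+b(K)+\chi c(K)}{(1-\lambda)D}\le p_0\le\frac{(\chi-1)\kappa}{(1-\lambda)D}.$$ Define, for $x\in\{0,K\}$ and $y\in[0,K]$, $$p(x,y)=\frac{1}{\lambda}\left(\frac{b(y)+\chi c(y)+(\chi-1)\kappa}{D}-(1-\lambda)p_0\right).$$ Then $p(x,y)\in[0,1]$, and the memory-one strategy for $X$ with $\sigma_X^0=(1-p_0)\delta_0+p_0\delta_K$ and $\sigma_X[x,y]=(1-p(x,y))\delta_0+p(x,y)\delta_K$ enforces $\pi_X-\kappa=\chi(\pi_Y-\kappa)$ against every behavioral strategy of $Y$.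
   Context: Continuous Donation Game: fix $K>0$ and measurable nondecreasing functions $b,c:[0,K]\to\mathbb{R}$ with $b(0)=c(0)=0$ and $b(s)>c(s)$ for $s>0$. Action spaces $S_X=S_Y=[0,K]$ (for two-point strategies $X$ only uses actions in $\{0,K\}$), payoffs $u_X(x,y)=b(y)-c(x)$, $u_Y(x,y)=b(x)-c(y)$, discount factor $\lambda\in(0,1)$. Repeated-game framework: histories $\mathcal{H}=\bigsqcup_T(S_X\times S_Y)^T$; a behavioral strategy is a Markov kernel from histories to the player's action space; a memory-one strategy for $X$ consists of an initial probability measure $\sigma_X^0$ and a Markov kernel $\sigma_X[x,y]$ applied to the previous action pair. The strategies generate, via $\mu_0=\sigma_X[\varnothing]\otimes\sigma_Y[\varnothing]$ and $\mu_t(E'\times E)=\int_{E'}(\sigma_X[h]\otimes\sigma_Y[h])(E)\,d\mu_{t-1}(h)$, the laws $\nu_t(E)=\mu_t(\mathcal{H}^t\times E)$ of the action pair at time $t$, and $\pi_X=(1-\lambda)\sum_t\lambda^t\int u_X\,d\nu_t$, $\pi_Y=(1-\lambda)\sum_t\lambda^t\int u_Y\,d\nu_t$. $\delta_s$ is the Dirac measure at $s$. *)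

theory Defs
  imports "HOL-Probability.Probability"
begin

definition act_space :: "real \<Rightarrow> real measure" where
  "act_space K = restrict_space borel {0..K}"

definition pair_space :: "real \<Rightarrow> (real \<times> real) measure" where
  "pair_space K = act_space K \<Otimes>\<^sub>M act_space K"

text \<open>Histories of length T: (S_X x S_Y)^T, encoded as extensional functions on {..<T}.
  The history space H is the disjoint union over T of these.\<close>
definition hist_space :: "real \<Rightarrow> nat \<Rightarrow> (nat \<Rightarrow> real \<times> real) measure" where
  "hist_space K T = PiM {..<T} (\<lambda>_. pair_space K)"

definition behavioral_strategy ::
  "real \<Rightarrow> (nat \<Rightarrow> (nat \<Rightarrow> real \<times> real) \<Rightarrow> real measure) \<Rightarrow> bool" where
  "behavioral_strategy K \<sigma> \<longleftrightarrow>
     (\<forall>T. \<sigma> T \<in> hist_space K T \<rightarrow>\<^sub>M prob_algebra (act_space K))"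

definition memory_one ::
  "real measure \<Rightarrow> (real \<times> real \<Rightarrow> real measure) \<Rightarrow> nat \<Rightarrow> (nat \<Rightarrow> real \<times> real) \<Rightarrow> real measure" where
  "memory_one \<sigma>0 k T h = (if T = 0 then \<sigma>0 else k (h (T - 1)))"

definition two_point :: "real \<Rightarrow> real \<Rightarrow> real measure" where
  "two_point K q = measure_of (space (act_space K)) (sets (act_space K))
     (\<lambda>E. ennreal (1 - q) * emeasure (return (act_space K) 0) E
          + ennreal q * emeasure (return (act_space K) K) E)"

text \<open>mu_t: law of the history of length t+1 (action pairs at times 0..t).
  mu_0 = sigma_X[empty] (x) sigma_Y[empty];
  mu_t(E' x E) = integral over E' of (sigma_X[h] (x) sigma_Y[h])(E) d mu_{t-1}(h).\<close>
fun play :: "real \<Rightarrow> (nat \<Rightarrow> (nat \<Rightarrow> real \<times> real) \<Rightarrow> real measure)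
    \<Rightarrow> (nat \<Rightarrow> (nat \<Rightarrow> real \<times> real) \<Rightarrow> real measure) \<Rightarrow> nat \<Rightarrow> (nat \<Rightarrow> real \<times> real) measure" where
  "play K \<sigma>X \<sigma>Y 0 =
     distr (\<sigma>X 0 (\<lambda>_. undefined) \<Otimes>\<^sub>M \<sigma>Y 0 (\<lambda>_. undefined)) (hist_space K 1)
       (\<lambda>a. (\<lambda>i\<in>{..<1}. a))"
| "play K \<sigma>X \<sigma>Y (Suc t) =
     bind (play K \<sigma>X \<sigma>Y t)
       (\<lambda>h. distr (\<sigma>X (Suc t) h \<Otimes>\<^sub>M \<sigma>Y (Suc t) h) (hist_space K (Suc (Suc t)))
              (\<lambda>a. h(Suc t := a)))"

definition action_law :: "real \<Rightarrow> (nat \<Rightarrow> (nat \<Rightarrow> real \<times> real) \<Rightarrow> real measure)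
    \<Rightarrow> (nat \<Rightarrow> (nat \<Rightarrow> real \<times> real) \<Rightarrow> real measure) \<Rightarrow> nat \<Rightarrow> (real \<times> real) measure" where
  "action_law K \<sigma>X \<sigma>Y t = distr (play K \<sigma>X \<sigma>Y t) (pair_space K) (\<lambda>h. h t)"

definition payoff_X :: "(real \<Rightarrow> real) \<Rightarrow> (real \<Rightarrow> real) \<Rightarrow> real \<Rightarrow> real
    \<Rightarrow> (nat \<Rightarrow> (nat \<Rightarrow> real \<times> real) \<Rightarrow> real measure)
    \<Rightarrow> (nat \<Rightarrow> (nat \<Rightarrow> real \<times> real) \<Rightarrow> real measure) \<Rightarrow> real" where
  "payoff_X b c K lam \<sigma>X \<sigma>Y = (1 - lam) *
     (\<Sum>t. lam ^ t * (\<integral>a. b (snd a) - c (fst a) \<partial>(action_law K \<sigma>X \<sigma>Y t)))"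

definition payoff_Y :: "(real \<Rightarrow> real) \<Rightarrow> (real \<Rightarrow> real) \<Rightarrow> real \<Rightarrow> real
    \<Rightarrow> (nat \<Rightarrow> (nat \<Rightarrow> real \<times> real) \<Rightarrow> real measure)
    \<Rightarrow> (nat \<Rightarrow> (nat \<Rightarrow> real \<times> real) \<Rightarrow> real measure) \<Rightarrow> real" where
  "payoff_Y b c K lam \<sigma>X \<sigma>Y = (1 - lam) *
     (\<Sum>t. lam ^ t * (\<integral>a. b (fst a) - c (snd a) \<partial>(action_law K \<sigma>X \<sigma>Y t)))"

end

theory Submission
  imports Defs
begin

lemma space_act: "space (act_space K) = {0..K}"
  by (simp add: act_space_def space_restrict_space)

lemma sets_act_single: "x \<in> {0..K} \<Longrightarrow> {x} \<in> sets (act_space K)"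
  unfolding act_space_def by (auto simp: sets_restrict_space_iff)

lemma two_point_sets[simp]: "sets (two_point K q) = sets (act_space K)"
  unfolding two_point_def by (simp add: sets.sets_measure_of_eq)

lemma two_point_space[simp]: "space (two_point K q) = space (act_space K)"
  by (rule sets_eq_imp_space_eq) simp

lemma two_point_emeasure:
  assumes A: "A \<in> sets (act_space K)"
  shows "emeasure (two_point K q) A = ennreal (1 - q) * indicator A 0 + ennreal q * indicator A K"
proof -
  let ?M = "act_space K"
  let ?mu = "\<lambda>E. ennreal (1 - q) * emeasure (return ?M 0) E + ennreal q * emeasure (return ?M K) E"
  have ca: "countably_additive (sets ?M) ?mu"
  proof (unfold countably_additive_def, intro allI impI)
    fix F :: "nat \<Rightarrow> real set"
    assume h: "range F \<subseteq> sets ?M" "disjoint_family F" "\<Union> (range F) \<in> sets ?M"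
    have s0: "(\<Sum>i. emeasure (return ?M 0) (F i)) = emeasure (return ?M 0) (\<Union> (range F))"
      using h by (intro suminf_emeasure) auto
    have s1: "(\<Sum>i. emeasure (return ?M K) (F i)) = emeasure (return ?M K) (\<Union> (range F))"
      using h by (intro suminf_emeasure) auto
    show "(\<Sum>i. ?mu (F i)) = ?mu (\<Union> (range F))"
      by (subst suminf_add[symmetric]) (auto simp: s0 s1)
  qed
  have "emeasure (two_point K q) A = ?mu A"
    unfolding two_point_def
    by (rule emeasure_measure_of_sigma[OF sets.sigma_algebra_axioms _ ca A])
       (auto simp: positive_def)
  then show ?thesis using A by simp
qed

lemma two_point_prob:
  assumes K: "K > 0" and q: "0 \<le> q" "q \<le> 1"
  shows "prob_space (two_point K q)"
proof (rule prob_spaceI)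
  have "space (act_space K) \<in> sets (act_space K)" by simp
  then show "emeasure (two_point K q) (space (two_point K q)) = 1"
    using K q by (simp add: two_point_emeasure space_act ennreal_plus[symmetric] del: ennreal_plus)
qed

lemma two_point_in_prob_algebra:
  assumes K: "K > 0" and q: "0 \<le> q" "q \<le> 1"
  shows "two_point K q \<in> space (prob_algebra (act_space K))"
  using two_point_prob[OF assms] by (simp add: space_prob_algebra)

lemma two_point_integral:
  fixes F :: "real \<Rightarrow> real"
  assumes K: "K > 0" and q: "0 \<le> q" "q \<le> 1" and F: "F \<in> borel_measurable (act_space K)"
  shows "(\<integral>x. F x \<partial>two_point K q) = (1 - q) * F 0 + q * F K"
proof -
  interpret prob_space "two_point K q" by (rule two_point_prob[OF assms(1-3)])
  have s0: "{0} \<in> sets (act_space K)" using K by (intro sets_act_single) auto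
  have sK: "{K} \<in> sets (act_space K)" using K by (intro sets_act_single) auto
  have N: "space (act_space K) - {0, K} \<in> sets (act_space K)"
    using s0 sK by (metis Diff_insert sets.Diff sets.top)
  have "emeasure (two_point K q) (space (act_space K) - {0, K}) = 0"
    using N by (simp add: two_point_emeasure)
  then have ae: "AE x in two_point K q. x \<in> {0, K}"
    using N by (intro AE_I'[where N="space (act_space K) - {0, K}"]) auto
  have "(\<integral>x. F x \<partial>two_point K q) = (\<integral>x. F 0 * indicator {0} x + F K * indicator {K} x \<partial>two_point K q)"
    using ae K s0 sK by (intro integral_cong_AE) (auto simp: F measurable_cong_sets[OF two_point_sets refl] split: split_indicator)
  also have "\<dots> = F 0 * measure (two_point K q) {0} + F K * measure (two_point K q) {K}"
    using s0 sK by (subst Bochner_Integration.integral_add) (auto intro!: integrable_real_mult_indicator simp: less_top[symmetric])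
  also have "measure (two_point K q) {0} = 1 - q"
    using s0 K q by (simp add: measure_def two_point_emeasure)
  also have "measure (two_point K q) {K} = q"
    using sK K q by (simp add: measure_def two_point_emeasure)
  finally show ?thesis by simp
qed

lemma upd_meas:
  "(\<lambda>(h, a). h(Suc t := a)) \<in> hist_space K (Suc t) \<Otimes>\<^sub>M pair_space K \<rightarrow>\<^sub>M hist_space K (Suc (Suc t))"
proof -
  have "(\<lambda>x. (fst x)(Suc t := snd x)) \<in> hist_space K (Suc t) \<Otimes>\<^sub>M pair_space K \<rightarrow>\<^sub>M hist_space K (Suc (Suc t))"
    unfolding hist_space_def
    by (rule measurable_fun_upd[where J="{..<Suc t}"]) auto
  then show ?thesis by (simp add: case_prod_beta')
qed

lemma upd_meas1:
  assumes "h \<in> space (hist_space K (Suc t))"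
  shows "(\<lambda>a. h(Suc t := a)) \<in> pair_space K \<rightarrow>\<^sub>M hist_space K (Suc (Suc t))"
  using measurable_Pair2[OF upd_meas assms] by simp

lemma kernel_meas:
  assumes X: "behavioral_strategy K \<sigma>X" and Y: "behavioral_strategy K \<sigma>Y"
  shows "(\<lambda>h. distr (\<sigma>X (Suc t) h \<Otimes>\<^sub>M \<sigma>Y (Suc t) h) (hist_space K (Suc (Suc t))) (\<lambda>a. h(Suc t := a)))
     \<in> hist_space K (Suc t) \<rightarrow>\<^sub>M prob_algebra (hist_space K (Suc (Suc t)))"
proof (rule measurable_distr_prob_space2)
  show "(\<lambda>x. \<sigma>X (Suc t) x \<Otimes>\<^sub>M \<sigma>Y (Suc t) x) \<in> hist_space K (Suc t) \<rightarrow>\<^sub>M prob_algebra (pair_space K)"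
    unfolding pair_space_def
    using X Y by (intro measurable_pair_prob) (auto simp: behavioral_strategy_def)
  show "(\<lambda>(x, y). x(Suc t := y)) \<in> hist_space K (Suc t) \<Otimes>\<^sub>M pair_space K \<rightarrow>\<^sub>M hist_space K (Suc (Suc t))"
    by (rule upd_meas)
qed

lemma play0_meas: "(\<lambda>a. (\<lambda>i\<in>{..<1::nat}. a)) \<in> pair_space K \<rightarrow>\<^sub>M hist_space K 1"
  unfolding hist_space_def by (rule measurable_restrict) auto

lemma play_prob:
  assumes X: "behavioral_strategy K \<sigma>X" and Y: "behavioral_strategy K \<sigma>Y"
  shows "play K \<sigma>X \<sigma>Y t \<in> space (prob_algebra (hist_space K (Suc t)))"
proof (induction t)
  case 0
  have e: "(\<lambda>_. undefined) \<in> space (hist_space K 0)"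
    unfolding hist_space_def by (simp add: space_PiM)
  have "\<sigma>X 0 (\<lambda>_. undefined) \<in> space (prob_algebra (act_space K))"
    using X e by (auto simp: behavioral_strategy_def dest: measurable_space)
  moreover have "\<sigma>Y 0 (\<lambda>_. undefined) \<in> space (prob_algebra (act_space K))"
    using Y e by (auto simp: behavioral_strategy_def dest: measurable_space)
  ultimately have "\<sigma>X 0 (\<lambda>_. undefined) \<Otimes>\<^sub>M \<sigma>Y 0 (\<lambda>_. undefined) \<in> space (prob_algebra (pair_space K))"
    by (auto simp: space_prob_algebra pair_space_def intro!: prob_space_pair sets_pair_measure_cong)
  then show ?case
    using measurable_space[OF measurable_distr_prob_space[OF play0_meas]] by simp
next
  case (Suc t)
  have k: "(\<lambda>h. distr (\<sigma>X (Suc t) h \<Otimes>\<^sub>M \<sigma>Y (Suc t) h) (hist_space K (Suc (Suc t))) (\<lambda>a. h(Suc t := a)))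
     \<in> hist_space K (Suc t) \<rightarrow>\<^sub>M prob_algebra (hist_space K (Suc (Suc t)))"
    by (rule kernel_meas[OF X Y])
  show ?case
    using prob_space_bind'[OF Suc k] sets_bind'[OF Suc k] by (simp add: space_prob_algebra)
qed

lemma strat_space:
  assumes "behavioral_strategy K \<sigma>" "h \<in> space (hist_space K T)"
  shows "\<sigma> T h \<in> space (prob_algebra (act_space K))"
  using assms by (auto simp: behavioral_strategy_def dest: measurable_space)

lemma space_hist: "space (hist_space K T) = PiE {..<T} (\<lambda>_. {0..K} \<times> {0..K})"
  by (simp add: hist_space_def space_PiM pair_space_def space_pair_measure space_act)

lemma space_pair: "space (pair_space K) = {0..K} \<times> {0..K}"
  by (simp add: pair_space_def space_pair_measure space_act)

lemma play_sets: 
  assumes X: "behavioral_strategy K \<sigma>X" and Y: "behavioral_strategy K \<sigma>Y"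
  shows "sets (play K \<sigma>X \<sigma>Y t) = sets (hist_space K (Suc t))"
    and "prob_space (play K \<sigma>X \<sigma>Y t)"
  using play_prob[OF X Y, of t] by (auto simp: space_prob_algebra)

lemma pair_fst_integral:
  fixes G :: "real \<Rightarrow> real"
  assumes M: "M \<in> space (prob_algebra (act_space K))" and N: "N \<in> space (prob_algebra (act_space K))"
    and G: "G \<in> borel_measurable (act_space K)"
  shows "(\<integral>a. G (fst a) \<partial>(M \<Otimes>\<^sub>M N)) = (\<integral>x. G x \<partial>M)"
proof -
  interpret N: prob_space N using N by (simp add: space_prob_algebra)
  have GM: "G \<in> borel_measurable M" using M G by (simp add: space_prob_algebra cong: measurable_cong_sets)
  have "(\<integral>x. G x \<partial>M) = (\<integral>x. G x \<partial>distr (M \<Otimes>\<^sub>M N) M fst)"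
    by (simp add: N.distr_pair_fst)
  also have "\<dots> = (\<integral>a. G (fst a) \<partial>(M \<Otimes>\<^sub>M N))"
    using GM by (intro integral_distr) auto
  finally show ?thesis ..
qed

lemma play_Suc_integral:
  fixes G :: "real \<Rightarrow> real"
  assumes X: "behavioral_strategy K \<sigma>X" and Y: "behavioral_strategy K \<sigma>Y"
    and G: "G \<in> borel_measurable (act_space K)" and B: "\<And>x. x \<in> {0..K} \<Longrightarrow> \<bar>G x\<bar> \<le> B"
  shows "(\<integral>h. G (fst (h (Suc t))) \<partial>play K \<sigma>X \<sigma>Y (Suc t))
       = (\<integral>h. (\<integral>x. G x \<partial>\<sigma>X (Suc t) h) \<partial>play K \<sigma>X \<sigma>Y t)"
proof -
  let ?k = "\<lambda>h. distr (\<sigma>X (Suc t) h \<Otimes>\<^sub>M \<sigma>Y (Suc t) h) (hist_space K (Suc (Suc t))) (\<lambda>a. h(Suc t := a))"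
  have k: "?k \<in> hist_space K (Suc t) \<rightarrow>\<^sub>M prob_algebra (hist_space K (Suc (Suc t)))"
    by (rule kernel_meas[OF X Y])
  have ps: "prob_space (play K \<sigma>X \<sigma>Y t)" and ss: "sets (play K \<sigma>X \<sigma>Y t) = sets (hist_space K (Suc t))"
    using play_sets[OF X Y] by auto
  have k': "?k \<in> play K \<sigma>X \<sigma>Y t \<rightarrow>\<^sub>M subprob_algebra (hist_space K (Suc (Suc t)))"
    using measurable_prob_algebraD[OF k] by (simp cong: measurable_cong_sets[OF ss refl])
  have fm: "(\<lambda>h. G (fst (h (Suc t)))) \<in> borel_measurable (hist_space K (Suc (Suc t)))"
  proof -
    have "(\<lambda>h. h (Suc t)) \<in> hist_space K (Suc (Suc t)) \<rightarrow>\<^sub>M pair_space K"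
      unfolding hist_space_def by (rule measurable_component_singleton) auto
    moreover have "fst \<in> pair_space K \<rightarrow>\<^sub>M act_space K"
      unfolding pair_space_def by simp
    ultimately have "(\<lambda>h. fst (h (Suc t))) \<in> hist_space K (Suc (Suc t)) \<rightarrow>\<^sub>M act_space K"
      by (rule measurable_compose)
    from measurable_compose[OF this G] show ?thesis .
  qed
  have fb: "\<bar>G (fst (h (Suc t)))\<bar> \<le> B" if "h \<in> space (hist_space K (Suc (Suc t)))" for h
  proof -
    have "h (Suc t) \<in> {0..K} \<times> {0..K}" using that by (auto simp: space_hist PiE_iff)
    then show ?thesis using B by (cases "h (Suc t)") auto
  qed
  have ae: "AE h in play K \<sigma>X \<sigma>Y t. emeasure (?k h) (space (?k h)) \<le> ennreal 1"
  proof (rule AE_I2)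
    fix h assume "h \<in> space (play K \<sigma>X \<sigma>Y t)"
    then have "?k h \<in> space (prob_algebra (hist_space K (Suc (Suc t))))"
      using measurable_space[OF k] ss by (simp cong: sets_eq_imp_space_eq)
    then have "prob_space (?k h)" by (simp add: space_prob_algebra)
    from prob_space.emeasure_space_1[OF this] show "emeasure (?k h) (space (?k h)) \<le> ennreal 1"
      by simp
  qed
  have "(\<integral>h. G (fst (h (Suc t))) \<partial>play K \<sigma>X \<sigma>Y (Suc t)) = (\<integral>h. (\<integral>g. G (fst (g (Suc t))) \<partial>?k h) \<partial>play K \<sigma>X \<sigma>Y t)"
  proof -
    have fin: "finite_measure (play K \<sigma>X \<sigma>Y t)" using ps by (simp add: prob_space_def)
    show ?thesis unfolding play.simps
      by (rule integral_bind[where N="?k" and M="play K \<sigma>X \<sigma>Y t" and B'=1 and B=B and K="hist_space K (Suc (Suc t))" and f="\<lambda>h. G (fst (h (Suc t)))"]) (fact fm, erule fb, fact k', fact fin, fact ae)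
  qed
  also have "\<dots> = (\<integral>h. (\<integral>x. G x \<partial>\<sigma>X (Suc t) h) \<partial>play K \<sigma>X \<sigma>Y t)"
  proof (rule Bochner_Integration.integral_cong[OF refl])
    fix h assume h: "h \<in> space (play K \<sigma>X \<sigma>Y t)"
    then have h': "h \<in> space (hist_space K (Suc t))" using ss by (simp cong: sets_eq_imp_space_eq)
    have sx: "\<sigma>X (Suc t) h \<in> space (prob_algebra (act_space K))" by (rule strat_space[OF X h'])
    have sy: "\<sigma>Y (Suc t) h \<in> space (prob_algebra (act_space K))" by (rule strat_space[OF Y h'])
    have sp: "sets (\<sigma>X (Suc t) h \<Otimes>\<^sub>M \<sigma>Y (Suc t) h) = sets (pair_space K)"
      using sx sy unfolding pair_space_def by (intro sets_pair_measure_cong) (auto simp: space_prob_algebra)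
    have "(\<integral>g. G (fst (g (Suc t))) \<partial>?k h) = (\<integral>a. G (fst ((h(Suc t := a)) (Suc t))) \<partial>(\<sigma>X (Suc t) h \<Otimes>\<^sub>M \<sigma>Y (Suc t) h))"
      using upd_meas1[OF h'] fm by (intro integral_distr) (simp_all cong: measurable_cong_sets[OF sp refl])
    also have "\<dots> = (\<integral>a. G (fst a) \<partial>(\<sigma>X (Suc t) h \<Otimes>\<^sub>M \<sigma>Y (Suc t) h))" by simp
    also have "\<dots> = (\<integral>x. G x \<partial>\<sigma>X (Suc t) h)" by (rule pair_fst_integral[OF sx sy G])
    finally show "(\<integral>g. G (fst (g (Suc t))) \<partial>?k h) = (\<integral>x. G x \<partial>\<sigma>X (Suc t) h)" .
  qed
  finally show ?thesis .
qed

lemma comp_meas: "(\<lambda>h. h t) \<in> hist_space K (Suc t) \<rightarrow>\<^sub>M pair_space K"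
  unfolding hist_space_def by (rule measurable_component_singleton) auto

lemma memory_one_behavioral:
  assumes K: "K > 0" and p0: "0 \<le> p0" "p0 \<le> 1"
    and q: "q \<in> borel_measurable (pair_space K)"
    and qb: "\<And>a. a \<in> space (pair_space K) \<Longrightarrow> 0 \<le> q a \<and> q a \<le> 1"
  shows "behavioral_strategy K (memory_one (two_point K p0) (\<lambda>xy. two_point K (q xy)))"
  unfolding behavioral_strategy_def
proof
  fix T show "memory_one (two_point K p0) (\<lambda>xy. two_point K (q xy)) T \<in> hist_space K T \<rightarrow>\<^sub>M prob_algebra (act_space K)"
  proof (cases T)
    case 0
    have "memory_one (two_point K p0) (\<lambda>xy. two_point K (q xy)) T = (\<lambda>h. two_point K p0)"
      using 0 by (intro ext) (simp add: memory_one_def)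
    then show ?thesis using two_point_in_prob_algebra[OF K p0] by simp
  next
    case (Suc t)
    have ht: "h t \<in> space (pair_space K)" if "h \<in> space (hist_space K (Suc t))" for h
      using measurable_space[OF comp_meas that] .
    have qm: "(\<lambda>h. q (h t)) \<in> borel_measurable (hist_space K (Suc t))"
      using measurable_compose[OF comp_meas q] .
    have "(\<lambda>h. two_point K (q (h t))) \<in> hist_space K (Suc t) \<rightarrow>\<^sub>M prob_algebra (act_space K)"
    proof (rule measurable_prob_algebraI)
      fix h assume "h \<in> space (hist_space K (Suc t))"
      then show "prob_space (two_point K (q (h t)))" using qb[OF ht] K by (intro two_point_prob) auto
    next
      show "(\<lambda>h. two_point K (q (h t))) \<in> hist_space K (Suc t) \<rightarrow>\<^sub>M subprob_algebra (act_space K)"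
      proof (rule measurable_subprob_algebra)
        fix h assume "h \<in> space (hist_space K (Suc t))"
        then show "subprob_space (two_point K (q (h t)))" using qb[OF ht] K
          by (intro prob_space_imp_subprob_space two_point_prob) auto
      next
        fix h show "sets (two_point K (q (h t))) = sets (act_space K)" by simp
      next
        fix A assume A: "A \<in> sets (act_space K)"
        have "(\<lambda>h. ennreal (1 - q (h t)) * indicator A 0 + ennreal (q (h t)) * indicator A K)
              \<in> borel_measurable (hist_space K (Suc t))"
          using qm by measurable
        then show "(\<lambda>h. emeasure (two_point K (q (h t))) A) \<in> borel_measurable (hist_space K (Suc t))"
          using A by (simp add: two_point_emeasure)
      qed
    qed
    moreover have "memory_one (two_point K p0) (\<lambda>xy. two_point K (q xy)) T = (\<lambda>h. two_point K (q (h t)))"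
      using Suc by (intro ext) (simp add: memory_one_def)
    ultimately show ?thesis using Suc by simp
  qed
qed

lemma bnd_integrable:
  fixes f :: "'a \<Rightarrow> real"
  assumes "prob_space M" "f \<in> borel_measurable M" "\<And>x. x \<in> space M \<Longrightarrow> \<bar>f x\<bar> \<le> B"
  shows "integrable M f"
proof -
  interpret prob_space M by fact
  show ?thesis using assms(2,3) by (intro integrable_const_bound[where B=B]) (auto intro!: AE_I2)
qed

lemma bnd_integral:
  fixes f :: "'a \<Rightarrow> real"
  assumes "prob_space M" "f \<in> borel_measurable M" "\<And>x. x \<in> space M \<Longrightarrow> \<bar>f x\<bar> \<le> B"
  shows "\<bar>\<integral>x. f x \<partial>M\<bar> \<le> B"
proof -
  interpret prob_space M by fact
  have i: "integrable M f" by (rule bnd_integrable[OF assms])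
  have "\<bar>\<integral>x. f x \<partial>M\<bar> \<le> (\<integral>x. \<bar>f x\<bar> \<partial>M)" by (rule integral_abs_bound)
  also have "\<dots> \<le> (\<integral>x. B \<partial>M)"
    using i assms(3) by (intro integral_mono) auto
  also have "\<dots> = B" by (simp add: prob_space)
  finally show ?thesis .
qed

lemma action_law_props:
  assumes X: "behavioral_strategy K \<sigma>X" and Y: "behavioral_strategy K \<sigma>Y"
  shows "prob_space (action_law K \<sigma>X \<sigma>Y t)" "sets (action_law K \<sigma>X \<sigma>Y t) = sets (pair_space K)"
    "space (action_law K \<sigma>X \<sigma>Y t) = {0..K} \<times> {0..K}"
proof -
  have m: "(\<lambda>h. h t) \<in> play K \<sigma>X \<sigma>Y t \<rightarrow>\<^sub>M pair_space K"
    using comp_meas play_sets(1)[OF X Y] by (simp cong: measurable_cong_sets)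
  show "prob_space (action_law K \<sigma>X \<sigma>Y t)"
    unfolding action_law_def using play_sets(2)[OF X Y] m by (intro prob_space.prob_space_distr) auto
  show "sets (action_law K \<sigma>X \<sigma>Y t) = sets (pair_space K)" by (simp add: action_law_def)
  then show "space (action_law K \<sigma>X \<sigma>Y t) = {0..K} \<times> {0..K}"
    using space_pair by (metis sets_eq_imp_space_eq)
qed

lemma action_law_integral:
  fixes F :: "real \<times> real \<Rightarrow> real"
  assumes X: "behavioral_strategy K \<sigma>X" and Y: "behavioral_strategy K \<sigma>Y"
    and F: "F \<in> borel_measurable (pair_space K)"
  shows "(\<integral>a. F a \<partial>action_law K \<sigma>X \<sigma>Y t) = (\<integral>h. F (h t) \<partial>play K \<sigma>X \<sigma>Y t)"
proof -
  have m: "(\<lambda>h. h t) \<in> play K \<sigma>X \<sigma>Y t \<rightarrow>\<^sub>M pair_space K"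
    using comp_meas play_sets(1)[OF X Y] by (simp cong: measurable_cong_sets)
  show ?thesis unfolding action_law_def by (rule integral_distr[OF m F])
qed

lemma play0_integral:
  fixes G :: "real \<Rightarrow> real"
  assumes X: "behavioral_strategy K \<sigma>X" and Y: "behavioral_strategy K \<sigma>Y"
    and G: "G \<in> borel_measurable (act_space K)"
  shows "(\<integral>h. G (fst (h 0)) \<partial>play K \<sigma>X \<sigma>Y 0) = (\<integral>x. G x \<partial>\<sigma>X 0 (\<lambda>_. undefined))"
proof -
  have e: "(\<lambda>_. undefined) \<in> space (hist_space K 0)"
    unfolding hist_space_def by (simp add: space_PiM)
  have sx: "\<sigma>X 0 (\<lambda>_. undefined) \<in> space (prob_algebra (act_space K))" by (rule strat_space[OF X e])
  have sy: "\<sigma>Y 0 (\<lambda>_. undefined) \<in> space (prob_algebra (act_space K))" by (rule strat_space[OF Y e])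
  have sp: "sets (\<sigma>X 0 (\<lambda>_. undefined) \<Otimes>\<^sub>M \<sigma>Y 0 (\<lambda>_. undefined)) = sets (pair_space K)"
    using sx sy unfolding pair_space_def by (intro sets_pair_measure_cong) (auto simp: space_prob_algebra)
  have fm: "(\<lambda>h. G (fst (h 0))) \<in> borel_measurable (hist_space K 1)"
  proof -
    have "(\<lambda>h. h 0) \<in> hist_space K 1 \<rightarrow>\<^sub>M pair_space K"
      using comp_meas[of 0 K] by simp
    moreover have "fst \<in> pair_space K \<rightarrow>\<^sub>M act_space K"
      unfolding pair_space_def by simp
    ultimately have "(\<lambda>h. fst (h 0)) \<in> hist_space K 1 \<rightarrow>\<^sub>M act_space K"
      by (rule measurable_compose)
    from measurable_compose[OF this G] show ?thesis .
  qed
  have "(\<integral>h. G (fst (h 0)) \<partial>play K \<sigma>X \<sigma>Y 0)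
      = (\<integral>a. G (fst ((\<lambda>i\<in>{..<1::nat}. a) 0)) \<partial>(\<sigma>X 0 (\<lambda>_. undefined) \<Otimes>\<^sub>M \<sigma>Y 0 (\<lambda>_. undefined)))"
  proof -
    have pm: "(\<lambda>a. (\<lambda>i\<in>{..<1::nat}. a)) \<in> (\<sigma>X 0 (\<lambda>_. undefined) \<Otimes>\<^sub>M \<sigma>Y 0 (\<lambda>_. undefined)) \<rightarrow>\<^sub>M hist_space K 1"
      using play0_meas[of K] measurable_cong_sets[OF sp refl] by blast
    show ?thesis unfolding play.simps by (rule integral_distr[OF pm fm])
  qed
  also have "\<dots> = (\<integral>a. G (fst a) \<partial>(\<sigma>X 0 (\<lambda>_. undefined) \<Otimes>\<^sub>M \<sigma>Y 0 (\<lambda>_. undefined)))" by simp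
  also have "\<dots> = (\<integral>x. G x \<partial>\<sigma>X 0 (\<lambda>_. undefined))" by (rule pair_fst_integral[OF sx sy G])
  finally show ?thesis .
qed

theorem mainTheorem9:
  fixes b c :: "real \<Rightarrow> real" and K lam chi kappa p0 :: real
  assumes K_pos: "K > 0"
    and b_meas: "b \<in> borel_measurable (act_space K)"
    and c_meas: "c \<in> borel_measurable (act_space K)"
    and b_mono: "mono_on {0..K} b" and c_mono: "mono_on {0..K} c"
    and b0: "b 0 = 0" and c0: "c 0 = 0"
    and bc: "\<forall>s\<in>{0<..K}. b s > c s"
    and lam: "0 < lam" "lam < 1"
    and chi: "chi \<ge> 1"
    and kappa: "0 \<le> kappa" "kappa \<le> b K - c K"
    and lam_bound: "lam \<ge> (b K + chi * c K) / (chi * b K + c K)"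
    and p0: "0 \<le> p0" "p0 \<le> 1"
    and p0_lower: "((chi - 1) * kappa - lam * (chi * b K + c K) + b K + chi * c K)
                     / ((1 - lam) * (chi * b K + c K)) \<le> p0"
    and p0_upper: "p0 \<le> ((chi - 1) * kappa) / ((1 - lam) * (chi * b K + c K))"
  shows "let D = chi * b K + c K;
             p = (\<lambda>(x, y). (1 / lam) * ((b y + chi * c y + (chi - 1) * kappa) / D
                                         - (1 - lam) * p0));
             \<sigma>X = memory_one (two_point K p0) (\<lambda>xy. two_point K (p xy))
         in (\<forall>x\<in>{0, K}. \<forall>y\<in>{0..K}. 0 \<le> p (x, y) \<and> p (x, y) \<le> 1)
            \<and> (\<forall>\<sigma>Y. behavioral_strategy K \<sigma>Y \<longrightarrow>
                 payoff_X b c K lam \<sigma>X \<sigma>Y - kappa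
                   = chi * (payoff_Y b c K lam \<sigma>X \<sigma>Y - kappa))"
proof -
  note [measurable] = b_meas c_meas
  define D where "D = chi * b K + c K"
  define pf where "pf = (\<lambda>y. (1 / lam) * ((b y + chi * c y + (chi - 1) * kappa) / D - (1 - lam) * p0))"
  define C where "C = (1 - lam) * D * p0 - (chi - 1) * kappa"
  have bb: "0 \<le> b y \<and> b y \<le> b K" if "y \<in> {0..K}" for y
    using b_mono b0 K_pos that unfolding mono_on_def by (metis atLeastAtMost_iff order.refl less_imp_le)
  have cb: "0 \<le> c y \<and> c y \<le> c K" if "y \<in> {0..K}" for y
    using c_mono c0 K_pos that unfolding mono_on_def by (metis atLeastAtMost_iff order.refl less_imp_le)
  have bcK: "b K > c K" using bc K_pos by auto
  have cK0: "c K \<ge> 0" using cb[of K] K_pos by auto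
  have Dpos: "D > 0" unfolding D_def using chi bcK cK0
    by (smt (verit, ccfv_SIG) mult_le_cancel_right1)
  have pf_alt: "pf y = ((b y + chi * c y + (chi - 1) * kappa) - (1 - lam) * p0 * D) / (lam * D)" for y
    unfolding pf_def using Dpos lam by (simp add: field_simps)
  have up: "(1 - lam) * p0 * D \<le> (chi - 1) * kappa"
    using p0_upper Dpos lam unfolding D_def[symmetric] by (simp add: pos_le_divide_eq mult.commute mult.left_commute)
  have lo: "(chi - 1) * kappa - lam * D + b K + chi * c K \<le> (1 - lam) * p0 * D"
    using p0_lower Dpos lam unfolding D_def[symmetric] by (simp add: pos_divide_le_eq mult.commute mult.left_commute)
  have pbnd: "0 \<le> pf y \<and> pf y \<le> 1" if "y \<in> {0..K}" for y
  proof -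
    have s0: "0 \<le> b y + chi * c y" using bb[OF that] cb[OF that] chi by simp
    have s1: "b y + chi * c y \<le> b K + chi * c K" using bb[OF that] cb[OF that] chi
      by (smt (verit, best) mult_left_mono)
    have "0 \<le> (b y + chi * c y + (chi - 1) * kappa) - (1 - lam) * p0 * D" using s0 up by linarith
    moreover have "(b y + chi * c y + (chi - 1) * kappa) - (1 - lam) * p0 * D \<le> lam * D" using s1 lo by linarith
    moreover have "lam * D > 0" using lam Dpos by simp
    ultimately show ?thesis unfolding pf_alt by (simp add: divide_le_eq_1)
  qed
  have p_eq: "(\<lambda>(x, y). (1 / lam) * ((b y + chi * c y + (chi - 1) * kappa) / (chi * b K + c K) - (1 - lam) * p0))
      = (\<lambda>a. pf (snd a))"
    by (auto simp: pf_def D_def)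
  have pfm: "pf \<in> borel_measurable (act_space K)" unfolding pf_def by measurable
  have qm: "(\<lambda>a. pf (snd a)) \<in> borel_measurable (pair_space K)"
    unfolding pair_space_def by (rule measurable_compose[OF measurable_snd pfm])
  define \<sigma>X where "\<sigma>X = memory_one (two_point K p0) (\<lambda>xy. two_point K (pf (snd xy)))"
  have X: "behavioral_strategy K \<sigma>X"
    unfolding \<sigma>X_def using K_pos p0 qm
    by (intro memory_one_behavioral[where q="\<lambda>a. pf (snd a)", simplified]) (auto simp: space_pair pbnd)
  have part2: "payoff_X b c K lam \<sigma>X \<sigma>Y - kappa = chi * (payoff_Y b c K lam \<sigma>X \<sigma>Y - kappa)"
    if Y: "behavioral_strategy K \<sigma>Y" for \<sigma>Y
  proof -
    let ?\<nu> = "action_law K \<sigma>X \<sigma>Y"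
    have nps: "prob_space (?\<nu> t)" for t using action_law_props[OF X Y] by auto
    have nsets: "sets (?\<nu> t) = sets (pair_space K)" for t using action_law_props[OF X Y] by auto
    have nspace: "space (?\<nu> t) = {0..K} \<times> {0..K}" for t using action_law_props[OF X Y] by auto
    define G where "G = (\<lambda>x. chi * b x + c x)"
    have Gm: "G \<in> borel_measurable (act_space K)" unfolding G_def by measurable
    have GB: "\<bar>G x\<bar> \<le> D" if "x \<in> {0..K}" for x
      using bb[OF that] cb[OF that] chi unfolding G_def D_def
      by (smt (verit, best) mult_left_mono mult_nonneg_nonneg)
    have G0: "G 0 = 0" by (simp add: G_def b0 c0)
    have GK: "G K = D" by (simp add: G_def D_def)
    define f1 where "f1 = (\<lambda>a::real\<times>real. b (snd a) - c (fst a))"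
    define f2 where "f2 = (\<lambda>a::real\<times>real. b (fst a) - c (snd a))"
    define A where "A = (\<lambda>t. \<integral>a. f1 a \<partial>?\<nu> t)"
    define B where "B = (\<lambda>t. \<integral>a. f2 a \<partial>?\<nu> t)"
    define XX where "XX = (\<lambda>t. \<integral>a. G (fst a) \<partial>?\<nu> t)"
    define P where "P = (\<lambda>t. \<integral>a. pf (snd a) \<partial>?\<nu> t)"
    have f1m: "f1 \<in> borel_measurable (pair_space K)" unfolding f1_def pair_space_def by measurable
    have f2m: "f2 \<in> borel_measurable (pair_space K)" unfolding f2_def pair_space_def by measurable
    have gm: "(\<lambda>a. G (fst a)) \<in> borel_measurable (pair_space K)"
      unfolding pair_space_def by (rule measurable_compose[OF measurable_fst Gm])
    have f1b: "\<bar>f1 a\<bar> \<le> b K + c K" if "a \<in> {0..K} \<times> {0..K}" for a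
      using that bb[of "snd a"] cb[of "fst a"] unfolding f1_def by (auto simp: mem_Times_iff abs_le_iff)
    have f2b: "\<bar>f2 a\<bar> \<le> b K + c K" if "a \<in> {0..K} \<times> {0..K}" for a
      using that bb[of "fst a"] cb[of "snd a"] unfolding f2_def by (auto simp: mem_Times_iff abs_le_iff)
    have gb: "\<bar>G (fst a)\<bar> \<le> D" if "a \<in> {0..K} \<times> {0..K}" for a
      using that GB by (cases a) auto
    have pb: "\<bar>pf (snd a)\<bar> \<le> 1" if "a \<in> {0..K} \<times> {0..K}" for a
      using that pbnd by (cases a) auto
    have mcong: "F \<in> borel_measurable (?\<nu> t)" if "F \<in> borel_measurable (pair_space K)" for F :: "real \<times> real \<Rightarrow> real" and t
      using that nsets by (simp cong: measurable_cong_sets)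
    have i1: "integrable (?\<nu> t) f1" for t
      by (rule bnd_integrable[OF nps mcong[OF f1m]]) (auto simp: nspace intro: f1b)
    have i2: "integrable (?\<nu> t) f2" for t
      by (rule bnd_integrable[OF nps mcong[OF f2m]]) (auto simp: nspace intro: f2b)
    have ig: "integrable (?\<nu> t) (\<lambda>a. G (fst a))" for t
      by (rule bnd_integrable[OF nps mcong[OF gm]]) (auto simp: nspace intro: gb)
    have ip: "integrable (?\<nu> t) (\<lambda>a. pf (snd a))" for t
      by (rule bnd_integrable[OF nps mcong[OF qm]]) (auto simp: nspace intro: pb)
    have Ab: "\<bar>A t\<bar> \<le> b K + c K" for t
      unfolding A_def by (rule bnd_integral[OF nps mcong[OF f1m]]) (auto simp: nspace intro: f1b)
    have Bb: "\<bar>B t\<bar> \<le> b K + c K" for t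
      unfolding B_def by (rule bnd_integral[OF nps mcong[OF f2m]]) (auto simp: nspace intro: f2b)
    have Xb: "\<bar>XX t\<bar> \<le> D" for t
      unfolding XX_def by (rule bnd_integral[OF nps mcong[OF gm]]) (auto simp: nspace intro: gb)
    have key: "A t - chi * B t = lam * D * P t + C - XX t" for t
    proof -
      have pw: "f1 a = (lam * D * pf (snd a) + C - G (fst a)) + chi * f2 a" for a
        unfolding f1_def f2_def G_def C_def pf_def using lam Dpos by (simp add: field_simps)
      have "A t = (\<integral>a. (lam * D * pf (snd a) + C - G (fst a)) + chi * f2 a \<partial>?\<nu> t)"
        unfolding A_def by (rule arg_cong[where f="integral\<^sup>L (?\<nu> t)"]) (rule ext, rule pw)
      also have "\<dots> = lam * D * P t + C - XX t + chi * B t"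
      proof -
        interpret prob_space "?\<nu> t" by (rule nps)
        have j0: "integrable (?\<nu> t) (\<lambda>a. lam * D * pf (snd a))" by (rule integrable_mult_right[OF ip])
        have jc: "integrable (?\<nu> t) (\<lambda>a. C)" by simp
        have j1: "integrable (?\<nu> t) (\<lambda>a. lam * D * pf (snd a) + C)" by (rule Bochner_Integration.integrable_add[OF j0 jc])
        have j2: "integrable (?\<nu> t) (\<lambda>a. lam * D * pf (snd a) + C - G (fst a))" by (rule Bochner_Integration.integrable_diff[OF j1 ig])
        have j3: "integrable (?\<nu> t) (\<lambda>a. chi * f2 a)" by (rule integrable_mult_right[OF i2])
        have "(\<integral>a. (lam * D * pf (snd a) + C - G (fst a)) + chi * f2 a \<partial>?\<nu> t)
            = (\<integral>a. lam * D * pf (snd a) + C - G (fst a) \<partial>?\<nu> t) + (\<integral>a. chi * f2 a \<partial>?\<nu> t)"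
          by (rule Bochner_Integration.integral_add[OF j2 j3])
        also have "(\<integral>a. lam * D * pf (snd a) + C - G (fst a) \<partial>?\<nu> t)
            = (\<integral>a. lam * D * pf (snd a) + C \<partial>?\<nu> t) - (\<integral>a. G (fst a) \<partial>?\<nu> t)"
          by (rule Bochner_Integration.integral_diff[OF j1 ig])
        also have "(\<integral>a. lam * D * pf (snd a) + C \<partial>?\<nu> t) = (\<integral>a. lam * D * pf (snd a) \<partial>?\<nu> t) + (\<integral>a. C \<partial>?\<nu> t)"
          by (rule Bochner_Integration.integral_add[OF j0 jc])
        finally show ?thesis unfolding P_def XX_def B_def by (simp add: prob_space)
      qed
      finally show ?thesis by simp
    qed
    have X0: "XX 0 = D * p0"
    proof -
      have "XX 0 = (\<integral>h. G (fst (h 0)) \<partial>play K \<sigma>X \<sigma>Y 0)"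
        unfolding XX_def by (rule action_law_integral[OF X Y gm])
      also have "\<dots> = (\<integral>x. G x \<partial>\<sigma>X 0 (\<lambda>_. undefined))" by (rule play0_integral[OF X Y Gm])
      also have "\<sigma>X 0 (\<lambda>_. undefined) = two_point K p0" by (simp add: \<sigma>X_def memory_one_def)
      also have "(\<integral>x. G x \<partial>two_point K p0) = (1 - p0) * G 0 + p0 * G K"
        using K_pos p0 Gm by (intro two_point_integral) auto
      finally show ?thesis by (simp add: G0 GK)
    qed
    have XS: "XX (Suc t) = D * P t" for t
    proof -
      have "XX (Suc t) = (\<integral>h. G (fst (h (Suc t))) \<partial>play K \<sigma>X \<sigma>Y (Suc t))"
        unfolding XX_def by (rule action_law_integral[OF X Y gm])
      also have "\<dots> = (\<integral>h. (\<integral>x. G x \<partial>\<sigma>X (Suc t) h) \<partial>play K \<sigma>X \<sigma>Y t)"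
        by (rule play_Suc_integral[OF X Y Gm GB])
      also have "\<dots> = (\<integral>h. D * pf (snd (h t)) \<partial>play K \<sigma>X \<sigma>Y t)"
      proof (rule Bochner_Integration.integral_cong[OF refl])
        fix h assume h: "h \<in> space (play K \<sigma>X \<sigma>Y t)"
        then have "h \<in> space (hist_space K (Suc t))"
          using play_sets(1)[OF X Y] by (simp cong: sets_eq_imp_space_eq)
        then have "h t \<in> {0..K} \<times> {0..K}" using measurable_space[OF comp_meas] space_pair by blast
        then have q: "0 \<le> pf (snd (h t))" "pf (snd (h t)) \<le> 1" using pbnd by (auto simp: mem_Times_iff)
        have "\<sigma>X (Suc t) h = two_point K (pf (snd (h t)))" by (simp add: \<sigma>X_def memory_one_def)
        moreover have "(\<integral>x. G x \<partial>two_point K (pf (snd (h t)))) = (1 - pf (snd (h t))) * G 0 + pf (snd (h t)) * G K"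
          using K_pos q Gm by (intro two_point_integral) auto
        ultimately show "(\<integral>x. G x \<partial>\<sigma>X (Suc t) h) = D * pf (snd (h t))" by (simp add: G0 GK)
      qed
      also have "\<dots> = D * (\<integral>h. pf (snd (h t)) \<partial>play K \<sigma>X \<sigma>Y t)" by simp
      also have "(\<integral>h. pf (snd (h t)) \<partial>play K \<sigma>X \<sigma>Y t) = P t"
        unfolding P_def by (rule action_law_integral[OF X Y qm, symmetric])
      finally show ?thesis .
    qed
    have sA: "summable (\<lambda>t. lam ^ t * A t)"
      by (rule summable_comparison_test'[where g="\<lambda>t. (b K + c K) * lam ^ t" and N=0])
         (use lam Ab in \<open>auto simp: abs_mult intro!: summable_mult summable_geometric mult_right_mono[where b="b K + c K"]\<close>)
    have sB: "summable (\<lambda>t. lam ^ t * B t)"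
      by (rule summable_comparison_test'[where g="\<lambda>t. (b K + c K) * lam ^ t" and N=0])
         (use lam Bb in \<open>auto simp: abs_mult intro!: summable_mult summable_geometric mult_right_mono[where b="b K + c K"]\<close>)
    have sX: "summable (\<lambda>t. lam ^ t * XX t)"
      by (rule summable_comparison_test'[where g="\<lambda>t. D * lam ^ t" and N=0])
         (use lam Xb in \<open>auto simp: abs_mult intro!: summable_mult summable_geometric mult_right_mono[where b="D"]\<close>)
    have Xlim: "(\<lambda>t. lam ^ t * XX t) \<longlonglongrightarrow> 0" by (rule summable_LIMSEQ_zero[OF sX])
    have tele: "(\<lambda>t. lam ^ Suc t * XX (Suc t) - lam ^ t * XX t) sums (0 - lam ^ 0 * XX 0)"
      by (rule telescope_sums[OF Xlim])
    have geo: "(\<lambda>t. lam ^ t * C) sums (C / (1 - lam))"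
      using sums_mult2[OF geometric_sums[of lam], of C] lam by simp
    have "(\<lambda>t. (lam ^ Suc t * XX (Suc t) - lam ^ t * XX t) + lam ^ t * C) sums ((0 - lam ^ 0 * XX 0) + C / (1 - lam))"
      by (rule sums_add[OF tele geo])
    moreover have "(\<lambda>t. (lam ^ Suc t * XX (Suc t) - lam ^ t * XX t) + lam ^ t * C) = (\<lambda>t. lam ^ t * A t - chi * (lam ^ t * B t))"
    proof
      fix t
      have "lam ^ t * A t - chi * (lam ^ t * B t) = lam ^ t * (A t - chi * B t)" by (simp add: algebra_simps)
      also have "\<dots> = lam ^ t * (lam * D * P t + C - XX t)" by (simp add: key)
      also have "\<dots> = (lam ^ Suc t * XX (Suc t) - lam ^ t * XX t) + lam ^ t * C" by (simp add: XS algebra_simps)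
      finally show "(lam ^ Suc t * XX (Suc t) - lam ^ t * XX t) + lam ^ t * C = lam ^ t * A t - chi * (lam ^ t * B t)" ..
    qed
    ultimately have s1: "(\<lambda>t. lam ^ t * A t - chi * (lam ^ t * B t)) sums (C / (1 - lam) - D * p0)"
      by (simp add: X0)
    have s2: "(\<lambda>t. lam ^ t * A t - chi * (lam ^ t * B t)) sums ((\<Sum>t. lam ^ t * A t) - chi * (\<Sum>t. lam ^ t * B t))"
      by (intro sums_diff sums_mult summable_sums sA sB)
    have eq: "(\<Sum>t. lam ^ t * A t) - chi * (\<Sum>t. lam ^ t * B t) = C / (1 - lam) - D * p0"
      using sums_unique2[OF s2 s1] .
    have PX: "payoff_X b c K lam \<sigma>X \<sigma>Y = (1 - lam) * (\<Sum>t. lam ^ t * A t)"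
      unfolding payoff_X_def A_def f1_def ..
    have PY: "payoff_Y b c K lam \<sigma>X \<sigma>Y = (1 - lam) * (\<Sum>t. lam ^ t * B t)"
      unfolding payoff_Y_def B_def f2_def ..
    have "(1 - lam) * ((\<Sum>t. lam ^ t * A t) - chi * (\<Sum>t. lam ^ t * B t)) = C - (1 - lam) * D * p0"
    proof -
      have "(1 - lam) * ((\<Sum>t. lam ^ t * A t) - chi * (\<Sum>t. lam ^ t * B t)) = (1 - lam) * (C / (1 - lam) - D * p0)"
        by (simp only: eq)
      also have "\<dots> = C - (1 - lam) * D * p0" using lam by (simp add: field_simps)
      finally show ?thesis .
    qed
    then show ?thesis unfolding PX PY C_def by (simp add: algebra_simps)
  qed
  show ?thesis
    unfolding Let_def p_eq \<sigma>X_def[symmetric] using part2 pbnd by auto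
qed

end
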